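(* Let $z,\zeta\in\mathbb C$ with $0<\mathrm{Re}\,z<1$ and $0<\mathrm{Re}\,\zeta<1$. Let $f\in C^1([0,\infty))$ be such that $f\in L^1(\mathbb R_+,|\lambda^{z-1}|d\lambda)\cap L^1(\mathbb R_+,|\lambda^{\zeta-1}|d\lambda)$, $f'\in L^1(\mathbb R_+,|\lambda^{z+\zeta-1}|d\lambda)$ and $\tilde f\in L^1(\mathbb R_+^2,|\lambda^{z-1}\mu^{\zeta-1}|d\lambda d\mu)$. Then $$\gamma_1(z)\gamma_1(\zeta)\int_{\mathbb R_+^2}\lambda^{z-1}\mu^{\zeta-1}\tilde f(\lambda,\mu)\,d\lambda d\mu=\gamma_2(z+\zeta)\int_0^\infty\lambda^{z+\zeta-1}f'(\lambda)\,d\lambda.$$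
   Context: $\mathbb R_+=(0,\infty)$. For $k\in\mathbb Z_+$ and $z\in\mathbb C$, $\gamma_k(z)=\Gamma(k)/(\Gamma(z)\Gamma(k-z))$, $\Gamma$ the Gamma function. For $f\in C^1([0,\infty))$, $\tilde f(\lambda,\mu)=(f(\lambda)-f(\mu))/(\lambda-\mu)$ if $\lambda\ne\mu$ and $\tilde f(\lambda,\lambda)=f'(\lambda)$. Complex powers $\lambda^{z-1}$ for $\lambda>0$ are taken with the real logarithm. *)

theory Defs
  imports "HOL-Analysis.Analysis"
begin

definition gammak :: "nat \<Rightarrow> complex \<Rightarrow> complex" where
  "gammak k z = Gamma (of_nat k) / (Gamma z * Gamma (of_nat k - z))"

definition divdiff :: "(real \<Rightarrow> real) \<Rightarrow> (real \<Rightarrow> real) \<Rightarrow> real \<Rightarrow> real \<Rightarrow> real" where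
  "divdiff f f' x y = (if x \<noteq> y then (f x - f y) / (x - y) else f' x)"

definition C1_halfline :: "(real \<Rightarrow> real) \<Rightarrow> (real \<Rightarrow> real) \<Rightarrow> bool" where
  "C1_halfline f f' \<longleftrightarrow>
     (\<forall>x\<ge>0. (f has_real_derivative f' x) (at x within {0..})) \<and> continuous_on {0..} f'"

end

theory Submission
  imports Defs
begin

lemma transfer_lemma:
  fixes Phi :: "'a::euclidean_space \<Rightarrow> 'b::euclidean_space"
    and rA :: "'a \<Rightarrow> real" and rB :: "'b \<Rightarrow> real" and k :: "'b \<Rightarrow> complex"
  assumes [measurable]: "Phi \<in> borel_measurable borel" "rA \<in> borel_measurable borel" "rB \<in> borel_measurable borel"
    and nn1: "\<And>x. rA x \<ge> 0" and nn2: "\<And>x. rB x \<ge> 0"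
    and nn: "\<And>h. h \<in> borel_measurable borel \<Longrightarrow>
        (\<integral>\<^sup>+x. ennreal (rA x) * h (Phi x) \<partial>lborel) = (\<integral>\<^sup>+y. ennreal (rB y) * h y \<partial>lborel)"
    and k[measurable]: "k \<in> borel_measurable borel"
  shows "integrable lborel (\<lambda>x. rA x *\<^sub>R k (Phi x)) \<longleftrightarrow> integrable lborel (\<lambda>y. rB y *\<^sub>R k y)"
    and "integral\<^sup>L lborel (\<lambda>x. rA x *\<^sub>R k (Phi x)) = integral\<^sup>L lborel (\<lambda>y. rB y *\<^sub>R k y)"
proof -
  have eq: "distr (density lborel rA) lborel Phi = density lborel rB"
  proof (rule measure_eqI)
    fix A assume A: "A \<in> sets (distr (density lborel rA) lborel Phi)"
    hence A': "A \<in> sets borel" by simp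
    have "emeasure (distr (density lborel rA) lborel Phi) A
       = emeasure (density lborel rA) (Phi -` A \<inter> space (density lborel rA))"
      by (rule emeasure_distr) (use A' in auto)
    also have "\<dots> = (\<integral>\<^sup>+x. ennreal (rA x) * indicator (Phi -` A) x \<partial>lborel)"
      using A' measurable_sets[OF assms(1) A'] by (subst emeasure_density) auto
    also have "\<dots> = (\<integral>\<^sup>+x. ennreal (rA x) * indicator A (Phi x) \<partial>lborel)"
      by (intro nn_integral_cong) (auto simp: indicator_def)
    also have "\<dots> = (\<integral>\<^sup>+y. ennreal (rB y) * indicator A y \<partial>lborel)"
      using A' by (intro nn) auto
    also have "\<dots> = emeasure (density lborel rB) A"
      using A' by (subst emeasure_density) auto
    finally show "emeasure (distr (density lborel rA) lborel Phi) A = emeasure (density lborel rB) A" .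
  qed simp
  have "integrable lborel (\<lambda>x. rA x *\<^sub>R k (Phi x)) \<longleftrightarrow> integrable (density lborel rA) (\<lambda>x. k (Phi x))"
    using nn1 by (subst integrable_density) auto
  also have "\<dots> \<longleftrightarrow> integrable (distr (density lborel rA) lborel Phi) k"
    by (subst integrable_distr_eq) auto
  also have "\<dots> \<longleftrightarrow> integrable lborel (\<lambda>y. rB y *\<^sub>R k y)"
    unfolding eq using nn2 by (subst integrable_density) auto
  finally show "integrable lborel (\<lambda>x. rA x *\<^sub>R k (Phi x)) \<longleftrightarrow> integrable lborel (\<lambda>y. rB y *\<^sub>R k y)" .
  have "integral\<^sup>L lborel (\<lambda>x. rA x *\<^sub>R k (Phi x)) = integral\<^sup>L (density lborel rA) (\<lambda>x. k (Phi x))"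
    using nn1 by (subst integral_density) auto
  also have "\<dots> = integral\<^sup>L (distr (density lborel rA) lborel Phi) k"
    by (subst integral_distr) auto
  also have "\<dots> = integral\<^sup>L lborel (\<lambda>y. rB y *\<^sub>R k y)"
    unfolding eq using nn2 by (subst integral_density) auto
  finally show "integral\<^sup>L lborel (\<lambda>x. rA x *\<^sub>R k (Phi x)) = integral\<^sup>L lborel (\<lambda>y. rB y *\<^sub>R k y)" .
qed

lemma (in pair_sigma_finite) product_integral:
  fixes f :: "'a \<Rightarrow> complex" and g :: "'b \<Rightarrow> complex"
  assumes f: "integrable M1 f" and g: "integrable M2 g"
  shows "integrable (M1 \<Otimes>\<^sub>M M2) (\<lambda>p. f (fst p) * g (snd p))"
    and "integral\<^sup>L (M1 \<Otimes>\<^sub>M M2) (\<lambda>p. f (fst p) * g (snd p)) = integral\<^sup>L M1 f * integral\<^sup>L M2 g"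
proof -
  have [measurable]: "f \<in> borel_measurable M1" "g \<in> borel_measurable M2"
    using f g by auto
  show int: "integrable (M1 \<Otimes>\<^sub>M M2) (\<lambda>p. f (fst p) * g (snd p))"
  proof (subst integrable_iff_bounded, safe)
    show "(\<lambda>p. f (fst p) * g (snd p)) \<in> borel_measurable (M1 \<Otimes>\<^sub>M M2)" by measurable
    have "(\<integral>\<^sup>+ p. ennreal (norm (f (fst p) * g (snd p))) \<partial>(M1 \<Otimes>\<^sub>M M2))
        = (\<integral>\<^sup>+ x. \<integral>\<^sup>+ y. ennreal (norm (f x)) * ennreal (norm (g y)) \<partial>M2 \<partial>M1)"
      by (subst M2.nn_integral_fst[symmetric]) (auto simp: norm_mult ennreal_mult)
    also have "\<dots> = (\<integral>\<^sup>+ x. ennreal (norm (f x)) \<partial>M1) * (\<integral>\<^sup>+ y. ennreal (norm (g y)) \<partial>M2)"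
      by (simp add: nn_integral_cmult nn_integral_multc)
    also have "\<dots> < \<infinity>"
      using f g by (simp add: integrable_iff_bounded ennreal_mult_less_top)
    finally show "(\<integral>\<^sup>+ p. ennreal (norm (f (fst p) * g (snd p))) \<partial>(M1 \<Otimes>\<^sub>M M2)) < \<infinity>" .
  qed
  have "integral\<^sup>L (M1 \<Otimes>\<^sub>M M2) (\<lambda>p. f (fst p) * g (snd p)) = (\<integral>x. \<integral>y. f x * g y \<partial>M2 \<partial>M1)"
    using integral_fst'[OF int] by simp
  also have "\<dots> = (\<integral>x. f x * integral\<^sup>L M2 g \<partial>M1)"
    by simp
  also have "\<dots> = integral\<^sup>L M1 f * integral\<^sup>L M2 g" by simp
  finally show "integral\<^sup>L (M1 \<Otimes>\<^sub>M M2) (\<lambda>p. f (fst p) * g (snd p)) = integral\<^sup>L M1 f * integral\<^sup>L M2 g" .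
qed

lemma borel_fst_snd[measurable]:
  "fst \<in> borel_measurable (borel :: (real \<times> real) measure)"
  "snd \<in> borel_measurable (borel :: (real \<times> real) measure)"
  by (simp_all add: borel_measurable_continuous_onI continuous_on_fst continuous_on_snd continuous_on_id)

lemma borel_Times_real[measurable]:
  "A \<in> sets borel \<Longrightarrow> B \<in> sets borel \<Longrightarrow> A \<times> B \<in> sets (borel :: (real \<times> real) measure)"
  by (subst borel_prod[symmetric]) auto

lemma ind_Times_meas[measurable]:
  "A \<in> sets borel \<Longrightarrow> B \<in> sets borel \<Longrightarrow> (indicator (A \<times> B) :: real \<times> real \<Rightarrow> real) \<in> borel_measurable borel"
  by (intro borel_measurable_indicator borel_Times_real)

lemma lb2: "f \<in> borel_measurable borel \<Longrightarrow> f \<in> borel_measurable (lborel \<Otimes>\<^sub>M lborel :: ('a::euclidean_space \<times> 'b::euclidean_space) measure)"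
  unfolding lborel_prod by simp

lemma meas_comp2:
  fixes h :: "real \<times> real \<Rightarrow> 'b::{second_countable_topology, topological_space}" and \<phi> \<psi> :: "real \<times> real \<Rightarrow> real"
  assumes "h \<in> borel_measurable borel" "\<phi> \<in> borel_measurable borel" "\<psi> \<in> borel_measurable borel"
  shows "(\<lambda>x. h (\<phi> x, \<psi> x)) \<in> borel_measurable (lborel \<Otimes>\<^sub>M lborel)"
proof -
  have "(\<lambda>x. (\<phi> x, \<psi> x)) \<in> borel_measurable borel"
    using assms(2,3) by (subst borel_prod[symmetric]) measurable
  from measurable_compose[OF this assms(1)] show ?thesis unfolding lborel_prod by simp
qed
lemma nnA:
  fixes h :: "real \<times> real \<Rightarrow> ennreal"
  assumes hm[measurable]: "h \<in> borel_measurable borel"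
  shows "(\<integral>\<^sup>+p. ennreal (indicator ({0<..}\<times>{0<..}) p) * h (fst p + snd p, fst p / (fst p + snd p)) \<partial>lborel)
       = (\<integral>\<^sup>+p. ennreal (indicator ({0<..}\<times>{0<..<1}) p * fst p) * h p \<partial>lborel)"
proof -
  have m3: "(\<lambda>p. ennreal (indicator ({0<..}\<times>{0<..<1}) p * fst p) * h p) \<in> borel_measurable borel"
    by measurable
  have "(\<integral>\<^sup>+p. ennreal (indicator ({0<..}\<times>{0<..}) p) * h (fst p + snd p, fst p / (fst p + snd p)) \<partial>lborel)
     = (\<integral>\<^sup>+x. \<integral>\<^sup>+y. ennreal (indicator ({0<..}\<times>{0<..}) (x,y)) * h (x + y, x / (x + y)) \<partial>lborel \<partial>lborel)"
    by (subst lborel_prod[symmetric], subst lborel.nn_integral_fst[symmetric]) auto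
  also have "\<dots> = (\<integral>\<^sup>+x. \<integral>\<^sup>+u. ennreal (indicator {0<..} x * indicator {0<..} (u - x)) * h (u, x / u) \<partial>lborel \<partial>lborel)"
  proof (rule nn_integral_cong)
    fix x :: real
    have "(\<integral>\<^sup>+u. ennreal (indicator {0<..} x * indicator {0<..} (u - x)) * h (u, x / u) \<partial>lborel)
        = ennreal \<bar>1\<bar> * (\<integral>\<^sup>+y. ennreal (indicator {0<..} x * indicator {0<..} (x + 1 * y - x)) * h (x + 1 * y, x / (x + 1 * y)) \<partial>lborel)"
      by (rule nn_integral_real_affine) auto
    also have "\<dots> = (\<integral>\<^sup>+y. ennreal (indicator ({0<..}\<times>{0<..}) (x,y)) * h (x + y, x / (x + y)) \<partial>lborel)"
      by (auto intro!: nn_integral_cong simp: indicator_def)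
    finally show "(\<integral>\<^sup>+y. ennreal (indicator ({0<..}\<times>{0<..}) (x,y)) * h (x + y, x / (x + y)) \<partial>lborel)
        = (\<integral>\<^sup>+u. ennreal (indicator {0<..} x * indicator {0<..} (u - x)) * h (u, x / u) \<partial>lborel)" by simp
  qed
  also have "\<dots> = (\<integral>\<^sup>+u. \<integral>\<^sup>+x. ennreal (indicator {0<..} x * indicator {0<..} (u - x)) * h (u, x / u) \<partial>lborel \<partial>lborel)"
  proof (rule lborel_pair.Fubini'[symmetric])
    have [measurable]: "(\<lambda>p. h (snd p, fst p / snd p)) \<in> borel_measurable (lborel \<Otimes>\<^sub>M lborel)"
      by (rule meas_comp2) auto
    show "(\<lambda>(x, u). ennreal (indicator {0<..} x * indicator {0<..} (u - x)) * h (u, x / u)) \<in> borel_measurable (lborel \<Otimes>\<^sub>M lborel)"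
      by measurable
  qed
  also have "\<dots> = (\<integral>\<^sup>+u. \<integral>\<^sup>+r. ennreal (indicator ({0<..}\<times>{0<..<1}) (u,r) * u) * h (u, r) \<partial>lborel \<partial>lborel)"
  proof (rule nn_integral_cong)
    fix u :: real
    show "(\<integral>\<^sup>+x. ennreal (indicator {0<..} x * indicator {0<..} (u - x)) * h (u, x / u) \<partial>lborel)
        = (\<integral>\<^sup>+r. ennreal (indicator ({0<..}\<times>{0<..<1}) (u,r) * u) * h (u, r) \<partial>lborel)"
    proof (cases "u > 0")
      case True
      have "(\<integral>\<^sup>+x. ennreal (indicator {0<..} x * indicator {0<..} (u - x)) * h (u, x / u) \<partial>lborel)
          = ennreal \<bar>u\<bar> * (\<integral>\<^sup>+r. ennreal (indicator {0<..} (0 + u * r) * indicator {0<..} (u - (0 + u * r))) * h (u, (0 + u * r) / u) \<partial>lborel)"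
        using True by (intro nn_integral_real_affine) auto
      also have "\<dots> = ennreal u * (\<integral>\<^sup>+r. ennreal (indicator ({0<..}\<times>{0<..<1}) (u,r)) * h (u, r) \<partial>lborel)"
        using True by (auto intro!: nn_integral_cong arg_cong2[where f="(*)"] simp: indicator_def zero_less_mult_iff)
      also have "\<dots> = (\<integral>\<^sup>+r. ennreal u * (ennreal (indicator ({0<..}\<times>{0<..<1}) (u,r)) * h (u, r)) \<partial>lborel)"
        by (rule nn_integral_cmult[symmetric]) measurable
      also have "\<dots> = (\<integral>\<^sup>+r. ennreal (indicator ({0<..}\<times>{0<..<1}) (u,r) * u) * h (u, r) \<partial>lborel)"
        using True by (intro nn_integral_cong) (auto simp: indicator_def)
      finally show ?thesis .
    next
      case False
      have e1: "(\<lambda>x. ennreal (indicator {0<..} x * indicator {0<..} (u - x)) * h (u, x / u)) = (\<lambda>x. 0)"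
        using False by (auto simp: indicator_def fun_eq_iff)
      have e2: "(\<lambda>r. ennreal (indicator ({0<..}\<times>{0<..<1}) (u,r) * u) * h (u, r)) = (\<lambda>r. 0)"
        using False by (auto simp: indicator_def fun_eq_iff)
      show ?thesis by (simp only: e1 e2)
    qed
  qed
  also have "\<dots> = (\<integral>\<^sup>+p. ennreal (indicator ({0<..}\<times>{0<..<1}) p * fst p) * h p \<partial>lborel)"
    by (subst lborel_prod[symmetric], subst lborel.nn_integral_fst[symmetric]) (rule lb2[OF m3], auto)
  finally show ?thesis .
qed

lemma meas_pair_map:
  fixes f :: "'c::euclidean_space \<Rightarrow> 'a::euclidean_space" and g :: "'c \<Rightarrow> 'b::euclidean_space"
  assumes "f \<in> borel_measurable borel" "g \<in> borel_measurable borel"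
  shows "(\<lambda>x. (f x, g x)) \<in> borel_measurable borel"
  using assms by (subst borel_prod[symmetric]) measurable

lemma meas_fst_snd:
  "fst \<in> borel_measurable (borel :: ('a::euclidean_space \<times> 'b::euclidean_space) measure)"
  "snd \<in> borel_measurable (borel :: ('a::euclidean_space \<times> 'b::euclidean_space) measure)"
  by (simp_all add: borel_measurable_continuous_onI continuous_on_fst continuous_on_snd continuous_on_id)

lemma nn_scale:
  fixes G :: "real \<times> real \<Rightarrow> ennreal" and \<alpha> \<beta> :: real
  assumes Gm: "G \<in> borel_measurable borel" and a: "\<alpha> > 0" and b: "\<beta> > 0"
  shows "(\<integral>\<^sup>+p. G p \<partial>lborel) = ennreal (\<alpha> * \<beta>) * (\<integral>\<^sup>+p. G (\<alpha> * fst p, \<beta> * snd p) \<partial>lborel)"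
proof -
  have Gm2: "(\<lambda>p. G (\<alpha> * fst p, \<beta> * snd p)) \<in> borel_measurable borel"
    by (rule measurable_compose[OF _ Gm], intro borel_measurable_continuous_onI continuous_intros)
  have Gm': "case_prod (\<lambda>x y. G (x, y)) \<in> borel_measurable (lborel \<Otimes>\<^sub>M lborel)"
    using Gm by (intro lb2) simp
  have Gm2': "case_prod (\<lambda>x y. G (\<alpha> * x, \<beta> * y)) \<in> borel_measurable (lborel \<Otimes>\<^sub>M lborel)"
    using Gm2 by (intro lb2) (simp add: case_prod_beta')
  have "(\<integral>\<^sup>+p. G p \<partial>lborel) = (\<integral>\<^sup>+x. \<integral>\<^sup>+y. G (x, y) \<partial>lborel \<partial>lborel)"
    using Gm' by (subst lborel_prod[symmetric], subst lborel.nn_integral_fst[symmetric]) auto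
  also have "\<dots> = (\<integral>\<^sup>+x. ennreal \<beta> * \<integral>\<^sup>+y. G (x, \<beta> * y) \<partial>lborel \<partial>lborel)"
  proof (rule nn_integral_cong)
    fix x :: real
    have [measurable]: "(\<lambda>y. G (x, y)) \<in> borel_measurable borel"
      using measurable_Pair2[OF Gm', of x] by simp
    show "(\<integral>\<^sup>+y. G (x, y) \<partial>lborel) = ennreal \<beta> * \<integral>\<^sup>+y. G (x, \<beta> * y) \<partial>lborel"
      using nn_integral_real_affine[of "\<lambda>y. G (x, y)" \<beta> 0] b by simp
  qed
  also have "\<dots> = ennreal \<beta> * (\<integral>\<^sup>+x. \<integral>\<^sup>+y. G (x, \<beta> * y) \<partial>lborel \<partial>lborel)"
    by (rule nn_integral_cmult) (rule lborel.borel_measurable_nn_integral, rule lb2, simp only: case_prod_beta', rule measurable_compose[OF _ Gm], intro borel_measurable_continuous_onI continuous_intros)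
  also have "(\<integral>\<^sup>+x. \<integral>\<^sup>+y. G (x, \<beta> * y) \<partial>lborel \<partial>lborel)
      = ennreal \<alpha> * (\<integral>\<^sup>+x. \<integral>\<^sup>+y. G (\<alpha> * x, \<beta> * y) \<partial>lborel \<partial>lborel)"
  proof -
    have m: "(\<lambda>x. \<integral>\<^sup>+y. G (x, \<beta> * y) \<partial>lborel) \<in> borel_measurable borel"
    proof -
      have "case_prod (\<lambda>x y. G (x, \<beta> * y)) \<in> borel_measurable (lborel \<Otimes>\<^sub>M lborel)"
        by (intro lb2, simp only: case_prod_beta', rule measurable_compose[OF _ Gm], intro borel_measurable_continuous_onI continuous_intros)
      from lborel.borel_measurable_nn_integral[OF this] show ?thesis by simp
    qed
    show ?thesis using nn_integral_real_affine[OF m, of \<alpha> 0] a by simp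
  qed
  also have "(\<integral>\<^sup>+x. \<integral>\<^sup>+y. G (\<alpha> * x, \<beta> * y) \<partial>lborel \<partial>lborel) = (\<integral>\<^sup>+p. G (\<alpha> * fst p, \<beta> * snd p) \<partial>lborel)"
    using Gm2' by (subst lborel_prod[symmetric], subst lborel.nn_integral_fst[symmetric]) auto
  finally show ?thesis using a b by (simp add: ennreal_mult mult_ac)
qed

definition PhiB :: "(real \<times> real) \<times> real \<Rightarrow> (real \<times> real) \<times> real" where
  "PhiB q = ((snd q * fst (fst q) + (1 - snd q) * snd (fst q),
              snd q * fst (fst q) / (snd q * fst (fst q) + (1 - snd q) * snd (fst q))), snd q)"

lemma PhiB_meas: "PhiB \<in> borel_measurable borel"
  unfolding PhiB_def
  by (intro meas_pair_map borel_measurable_divide borel_measurable_continuous_onI continuous_intros)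

lemma ind_comp:
  fixes f :: "'a::euclidean_space \<Rightarrow> 'b::euclidean_space"
  assumes "A \<in> sets borel" "f \<in> borel_measurable borel"
  shows "(\<lambda>x. indicator A (f x) :: real) \<in> borel_measurable borel"
  using measurable_compose[OF assms(2) borel_measurable_indicator[OF assms(1)]] by (simp add: o_def)

lemma nnB:
  fixes h :: "(real \<times> real) \<times> real \<Rightarrow> ennreal"
  assumes hm: "h \<in> borel_measurable borel"
  shows "(\<integral>\<^sup>+q. ennreal (indicator ({0<..}\<times>{0<..}) (fst q) * indicator {0<..<1} (snd q)) * h (PhiB q) \<partial>lborel)
       = (\<integral>\<^sup>+q. ennreal (indicator ({0<..}\<times>{0<..<1}) (fst q) * indicator {0<..<1} (snd q)
                * (fst (fst q) / (snd q * (1 - snd q)))) * h q \<partial>lborel)"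
proof -
  have ind1: "(\<lambda>q::(real\<times>real)\<times>real. indicator ({0<..}\<times>{0<..}) (fst q) * indicator {0<..<1} (snd q) :: real) \<in> borel_measurable borel"
    by (intro borel_measurable_times ind_comp borel_Times_real meas_fst_snd) auto
  have ind2: "(\<lambda>q::(real\<times>real)\<times>real. indicator ({0<..}\<times>{0<..<1}) (fst q) * indicator {0<..<1} (snd q)
                * (fst (fst q) / (snd q * (1 - snd q))) :: real) \<in> borel_measurable borel"
    by (intro borel_measurable_times borel_measurable_divide ind_comp borel_Times_real meas_fst_snd borel_measurable_continuous_onI continuous_intros) auto
  have m1: "(\<lambda>q. ennreal (indicator ({0<..}\<times>{0<..}) (fst q) * indicator {0<..<1} (snd q)) * h (PhiB q)) \<in> borel_measurable borel"
    by (intro borel_measurable_times_ennreal measurable_compose[OF ind1] measurable_compose[OF PhiB_meas hm] measurable_ennreal)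
  have m2: "(\<lambda>q. ennreal (indicator ({0<..}\<times>{0<..<1}) (fst q) * indicator {0<..<1} (snd q)
                * (fst (fst q) / (snd q * (1 - snd q)))) * h q) \<in> borel_measurable borel"
    by (intro borel_measurable_times_ennreal measurable_compose[OF ind2] hm measurable_ennreal)
  have "(\<integral>\<^sup>+q. ennreal (indicator ({0<..}\<times>{0<..}) (fst q) * indicator {0<..<1} (snd q)) * h (PhiB q) \<partial>lborel)
     = (\<integral>\<^sup>+t. \<integral>\<^sup>+p. ennreal (indicator ({0<..}\<times>{0<..}) p * indicator {0<..<1} t) * h (PhiB (p, t)) \<partial>lborel \<partial>lborel)"
    using lb2[OF m1] by (subst lborel_prod[symmetric], subst lborel_pair.nn_integral_snd[symmetric]) (auto simp: case_prod_beta')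
  also have "\<dots> = (\<integral>\<^sup>+t. \<integral>\<^sup>+p. ennreal (indicator ({0<..}\<times>{0<..<1}) p * indicator {0<..<1} t
                * (fst p / (t * (1 - t)))) * h (p, t) \<partial>lborel \<partial>lborel)"
  proof (rule nn_integral_cong)
    fix t :: real
    show "(\<integral>\<^sup>+p. ennreal (indicator ({0<..}\<times>{0<..}) p * indicator {0<..<1} t) * h (PhiB (p, t)) \<partial>lborel)
        = (\<integral>\<^sup>+p. ennreal (indicator ({0<..}\<times>{0<..<1}) p * indicator {0<..<1} t
                * (fst p / (t * (1 - t)))) * h (p, t) \<partial>lborel)"
    proof (cases "t \<in> {0<..<1}")
      case True
      hence t: "0 < t" "t < 1" by auto
      have hpt: "(\<lambda>p. h (p, t)) \<in> borel_measurable borel"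
        by (rule measurable_compose[OF _ hm], intro borel_measurable_continuous_onI continuous_intros)
      define G where "G p = ennreal (indicator ({0<..}\<times>{0<..}) p) * h ((fst p + snd p, fst p / (fst p + snd p)), t)" for p
      have hA: "(\<lambda>p. h ((fst p + snd p, fst p / (fst p + snd p)), t)) \<in> borel_measurable borel"
        by (rule measurable_compose[OF _ hm], intro meas_pair_map borel_measurable_divide borel_measurable_continuous_onI continuous_intros)
      have Gm: "G \<in> borel_measurable borel" unfolding G_def
        by (intro borel_measurable_times_ennreal hA measurable_ennreal ind_Times_meas) auto
      have "(\<integral>\<^sup>+p. G p \<partial>lborel) = ennreal (t * (1 - t)) * (\<integral>\<^sup>+p. G (t * fst p, (1 - t) * snd p) \<partial>lborel)"
        using t by (intro nn_scale Gm) auto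
      also have "(\<lambda>p. G (t * fst p, (1 - t) * snd p)) = (\<lambda>p. ennreal (indicator ({0<..}\<times>{0<..}) p * indicator {0<..<1} t) * h (PhiB (p, t)))"
        using t by (auto simp: G_def PhiB_def indicator_def fun_eq_iff zero_less_mult_iff)
      finally have e1: "(\<integral>\<^sup>+p. G p \<partial>lborel) = ennreal (t * (1 - t)) * (\<integral>\<^sup>+p. ennreal (indicator ({0<..}\<times>{0<..}) p * indicator {0<..<1} t) * h (PhiB (p, t)) \<partial>lborel)" .
      have e2: "(\<integral>\<^sup>+p. G p \<partial>lborel) = (\<integral>\<^sup>+p. ennreal (indicator ({0<..}\<times>{0<..<1}) p * fst p) * h (p, t) \<partial>lborel)"
        unfolding G_def by (rule nnA[OF hpt])
      have "(\<integral>\<^sup>+p. ennreal (indicator ({0<..}\<times>{0<..}) p * indicator {0<..<1} t) * h (PhiB (p, t)) \<partial>lborel)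
          = ennreal (1 / (t * (1 - t))) * (ennreal (t * (1 - t)) * (\<integral>\<^sup>+p. ennreal (indicator ({0<..}\<times>{0<..}) p * indicator {0<..<1} t) * h (PhiB (p, t)) \<partial>lborel))"
        using t by (simp add: ennreal_mult'[symmetric] mult.assoc[symmetric])
      also have "\<dots> = ennreal (1 / (t * (1 - t))) * (\<integral>\<^sup>+p. ennreal (indicator ({0<..}\<times>{0<..<1}) p * fst p) * h (p, t) \<partial>lborel)"
        using e1 e2 by simp
      also have "\<dots> = (\<integral>\<^sup>+p. ennreal (1 / (t * (1 - t))) * (ennreal (indicator ({0<..}\<times>{0<..<1}) p * fst p) * h (p, t)) \<partial>lborel)"
        by (rule nn_integral_cmult[symmetric]) (intro borel_measurable_times_ennreal measurable_ennreal borel_measurable_times ind_Times_meas meas_fst_snd, auto intro: hpt)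
      also have "\<dots> = (\<integral>\<^sup>+p. ennreal (indicator ({0<..}\<times>{0<..<1}) p * indicator {0<..<1} t
                * (fst p / (t * (1 - t)))) * h (p, t) \<partial>lborel)"
        using t by (intro nn_integral_cong) (auto simp: indicator_def ennreal_mult'[symmetric] mult.assoc[symmetric])
      finally show ?thesis .
    next
      case False
      thus ?thesis by (auto simp: indicator_def)
    qed
  qed
  also have "\<dots> = (\<integral>\<^sup>+q. ennreal (indicator ({0<..}\<times>{0<..<1}) (fst q) * indicator {0<..<1} (snd q)
                * (fst (fst q) / (snd q * (1 - snd q)))) * h q \<partial>lborel)"
    using lb2[OF m2] by (subst lborel_prod[symmetric], subst lborel_pair.nn_integral_snd[symmetric]) (auto simp: case_prod_beta')
  finally show ?thesis .
qed

definition cp :: "real \<Rightarrow> complex \<Rightarrow> complex" where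
  "cp u c = exp (c * of_real (ln u))"

lemma cp_meas[measurable]: "f \<in> borel_measurable M \<Longrightarrow> (\<lambda>x. cp (f x) c) \<in> borel_measurable M"
  unfolding cp_def by measurable

lemma cp_mult: "u > 0 \<Longrightarrow> v > 0 \<Longrightarrow> cp (u * v) c = cp u c * cp v c"
  by (simp add: cp_def ln_mult distrib_left exp_add)

lemma cp_add: "cp u (c + d) = cp u c * cp u d"
  by (simp add: cp_def distrib_right exp_add)

lemma cp_one: "u > 0 \<Longrightarrow> cp u 1 = of_real u"
  by (simp add: cp_def exp_of_real)

lemma cp_inv: "u > 0 \<Longrightarrow> cp (1 / u) c = cp u (- c)"
  by (simp add: cp_def ln_div)

lemma cp_powr: "u > 0 \<Longrightarrow> complex_of_real u powr c = cp u c"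
  by (simp add: cp_def powr_def Ln_of_real mult.commute)

lemma norm_cp: "u > 0 \<Longrightarrow> norm (cp u c) = u powr Re c"
  by (simp add: cp_def powr_def)

lemma GammaL:
  assumes a: "Re a > 0"
  shows "integrable lborel (\<lambda>t. indicator {0<..} t *\<^sub>R (cp t (a - 1) * exp (- of_real t)))"
    and "integral\<^sup>L lborel (\<lambda>t. indicator {0<..} t *\<^sub>R (cp t (a - 1) * exp (- of_real t))) = Gamma a"
proof -
  let ?f = "\<lambda>t. complex_of_real t powr (a - 1) / of_real (exp t)"
  let ?g = "\<lambda>t. cp t (a - 1) * exp (- of_real t)"
  have eq: "?f t = ?g t" if "t \<in> {0<..}" for t
    using that by (simp add: cp_powr exp_of_real exp_minus field_simps)
  have m: "(\<lambda>t. indicator {0<..} t *\<^sub>R ?g t) \<in> borel_measurable lborel" by measurable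
  have "set_integrable lebesgue {0<..} ?f"
    using absolutely_integrable_Gamma_integral'[OF a] .
  hence "set_integrable lebesgue {0<..} ?g"
    using eq by (subst set_integrable_cong[of _ lebesgue _ "{0<..}" _ ?f]) auto
  hence I: "set_integrable lborel {0<..} ?g"
    unfolding set_integrable_def using m by (simp add: integrable_completion)
  thus "integrable lborel (\<lambda>t. indicator {0<..} t *\<^sub>R ?g t)" unfolding set_integrable_def .
  have "integral\<^sup>L lborel (\<lambda>t. indicator {0<..} t *\<^sub>R ?g t) = (LINT t:{0<..}|lborel. ?g t)"
    by (simp add: set_lebesgue_integral_def)
  also have "\<dots> = integral {0<..} ?g"
    by (rule set_borel_integral_eq_integral(2)[OF I])
  also have "\<dots> = integral {0<..} ?f"
    using eq by (intro integral_cong) auto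
  also have "\<dots> = Gamma a"
    using Gamma_integral_complex'[OF a] by (rule integral_unique)
  finally show "integral\<^sup>L lborel (\<lambda>t. indicator {0<..} t *\<^sub>R ?g t) = Gamma a" .
qed

lemma Psi_meas: "(\<lambda>p::real\<times>real. (fst p + snd p, fst p / (fst p + snd p))) \<in> borel_measurable borel"
  by (intro meas_pair_map borel_measurable_divide borel_measurable_continuous_onI continuous_intros)

lemma Gamma_nz: assumes "Re z > 0" shows "Gamma z \<noteq> 0"
proof
  assume "Gamma z = 0"
  hence "z \<in> \<int>\<^sub>\<le>\<^sub>0" by (simp add: Gamma_eq_zero_iff)
  then obtain n where "z = of_int n" "n \<le> 0" by (elim nonpos_Ints_cases)
  hence "Re z \<le> 0" by simp
  with assms show False by simp
qed

lemma BetaC: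
  assumes a: "Re a > 0" and b: "Re b > 0"
  shows "integrable lborel (\<lambda>r. indicator {0<..<1} r *\<^sub>R (cp r (a - 1) * cp (1 - r) (b - 1)))"
    and "integral\<^sup>L lborel (\<lambda>r. indicator {0<..<1} r *\<^sub>R (cp r (a - 1) * cp (1 - r) (b - 1))) = Beta a b"
proof -
  have Ib: "set_integrable lborel {0..1} (\<lambda>t. t powr (Re a - 1) * (1 - t) powr (Re b - 1))"
    using integrable_Beta[of "Re a" "Re b"] a b by simp
  show int: "integrable lborel (\<lambda>r. indicator {0<..<1} r *\<^sub>R (cp r (a - 1) * cp (1 - r) (b - 1)))"
  proof (rule Bochner_Integration.integrable_bound[OF Ib[unfolded set_integrable_def]])
    show "(\<lambda>r. indicator {0<..<1} r *\<^sub>R (cp r (a - 1) * cp (1 - r) (b - 1))) \<in> borel_measurable lborel"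
      by measurable
    show "AE x in lborel. norm (indicator {0<..<1} x *\<^sub>R (cp x (a - 1) * cp (1 - x) (b - 1)))
          \<le> norm (indicator {0..1} x *\<^sub>R (x powr (Re a - 1) * (1 - x) powr (Re b - 1)))"
      by (intro AE_I2) (auto simp: indicator_def norm_mult norm_cp)
  qed
  define k where "k q = cp (fst q * snd q) (a - 1) * cp (fst q * (1 - snd q)) (b - 1) * exp (- complex_of_real (fst q))" for q :: "real \<times> real"
  have km: "k \<in> borel_measurable borel" unfolding k_def by measurable
  have nnA': "(\<integral>\<^sup>+x. ennreal (indicator ({0<..}\<times>{0<..}) x) * h (fst x + snd x, fst x / (fst x + snd x)) \<partial>lborel)
      = (\<integral>\<^sup>+y. ennreal (indicator ({0<..}\<times>{0<..<1}) y * fst y) * h y \<partial>lborel)"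
    if "h \<in> borel_measurable borel" for h :: "real \<times> real \<Rightarrow> ennreal"
    using nnA[OF that] by simp
  note T = transfer_lemma[where Phi = "\<lambda>p. (fst p + snd p, fst p / (fst p + snd p))"
      and rA = "\<lambda>p. indicator ({0<..}\<times>{0<..}) p" and rB = "\<lambda>p. indicator ({0<..}\<times>{0<..<1}) p * fst p" and k = k,
      OF Psi_meas ind_Times_meas _ _ _ nnA' km]
  have m2: "(\<lambda>p::real\<times>real. indicator ({0<..}\<times>{0<..<1}) p * fst p :: real) \<in> borel_measurable borel"
    by (intro borel_measurable_times ind_Times_meas meas_fst_snd) auto
  have nn2: "\<And>p. 0 \<le> indicator ({0<..}\<times>{0<..<1}) p * fst (p::real\<times>real)"
    by (auto simp: indicator_def)
  note T2 = T(2)[OF _ _ m2 _ nn2, simplified]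
  have L: "(\<lambda>x. indicator ({0<..}\<times>{0<..}) x *\<^sub>R k (fst x + snd x, fst x / (fst x + snd x)))
     = (\<lambda>p. (indicator {0<..} (fst p) *\<^sub>R (cp (fst p) (a - 1) * exp (- of_real (fst p))))
           * (indicator {0<..} (snd p) *\<^sub>R (cp (snd p) (b - 1) * exp (- of_real (snd p)))))"
  proof
    fix p :: "real \<times> real"
    obtain x y where p: "p = (x, y)" by (cases p)
    show "indicator ({0<..}\<times>{0<..}) p *\<^sub>R k (fst p + snd p, fst p / (fst p + snd p))
     = (indicator {0<..} (fst p) *\<^sub>R (cp (fst p) (a - 1) * exp (- of_real (fst p))))
           * (indicator {0<..} (snd p) *\<^sub>R (cp (snd p) (b - 1) * exp (- of_real (snd p))))"
    proof (cases "x > 0 \<and> y > 0")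
      case True
      hence e1: "(x + y) * (x / (x + y)) = x" and e2: "(x + y) * (1 - x / (x + y)) = y"
        by (auto simp: field_simps)
      show ?thesis using True unfolding p k_def
        by (simp add: e1 e2 indicator_def exp_add[symmetric])
    qed (auto simp: p indicator_def)
  qed
  have R: "(\<lambda>y. (indicator ({0<..}\<times>{0<..<1}) y * fst y) *\<^sub>R k y)
     = (\<lambda>p. (indicator {0<..} (fst p) *\<^sub>R (cp (fst p) (a + b - 1) * exp (- of_real (fst p))))
           * (indicator {0<..<1} (snd p) *\<^sub>R (cp (snd p) (a - 1) * cp (1 - snd p) (b - 1))))"
  proof
    fix p :: "real \<times> real"
    obtain s r where p: "p = (s, r)" by (cases p)
    show "(indicator ({0<..}\<times>{0<..<1}) p * fst p) *\<^sub>R k p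
     = (indicator {0<..} (fst p) *\<^sub>R (cp (fst p) (a + b - 1) * exp (- of_real (fst p))))
           * (indicator {0<..<1} (snd p) *\<^sub>R (cp (snd p) (a - 1) * cp (1 - snd p) (b - 1)))"
    proof (cases "s > 0 \<and> 0 < r \<and> r < 1")
      case True
      have "cp s (a + b - 1) = cp s 1 * cp s (a - 1) * cp s (b - 1)"
        by (simp add: cp_add[symmetric] algebra_simps)
      thus ?thesis using True unfolding p k_def
        by (simp add: indicator_def cp_mult cp_one scaleR_conv_of_real mult_ac)
    qed (auto simp: p indicator_def)
  qed
  have G: "Gamma a * Gamma b = Gamma (a + b) * integral\<^sup>L lborel (\<lambda>r. indicator {0<..<1} r *\<^sub>R (cp r (a - 1) * cp (1 - r) (b - 1)))"
  proof -
    have "Gamma a * Gamma b = integral\<^sup>L lborel (\<lambda>x. indicator ({0<..}\<times>{0<..}) x *\<^sub>R k (fst x + snd x, fst x / (fst x + snd x)))"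
      unfolding L using lborel_pair.product_integral(2)[OF GammaL(1)[OF a] GammaL(1)[OF b]]
      by (simp add: lborel_prod GammaL(2) a b)
    also have "\<dots> = integral\<^sup>L lborel (\<lambda>y. (indicator ({0<..}\<times>{0<..<1}) y * fst y) *\<^sub>R k y)"
      by (rule T2)
    also have "\<dots> = Gamma (a + b) * integral\<^sup>L lborel (\<lambda>r. indicator {0<..<1} r *\<^sub>R (cp r (a - 1) * cp (1 - r) (b - 1)))"
      unfolding R using lborel_pair.product_integral(2)[OF GammaL(1)[of "a+b"] int] a b
      by (simp add: lborel_prod GammaL(2))
    finally show ?thesis .
  qed
  have "Gamma (a + b) \<noteq> 0" using a b by (intro Gamma_nz) simp
  with G show "integral\<^sup>L lborel (\<lambda>r. indicator {0<..<1} r *\<^sub>R (cp r (a - 1) * cp (1 - r) (b - 1))) = Beta a b"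
    by (simp add: Beta_def field_simps)
qed

lemma ftc_real:
  assumes C1: "C1_halfline f f'" and x: "x > 0" and y: "y > 0"
  shows "integrable lborel (\<lambda>t. indicator {0<..<1} t * f' (t * x + (1 - t) * y))"
    and "integral\<^sup>L lborel (\<lambda>t. indicator {0<..<1} t * f' (t * x + (1 - t) * y)) = divdiff f f' x y"
proof -
  define g where "g t = f' (t * x + (1 - t) * y)" for t
  have pos: "t * x + (1 - t) * y > 0" if "t \<in> {0..1}" for t
  proof (cases "t > 0")
    case True
    have "t * x > 0" using True x by simp
    moreover have "(1 - t) * y \<ge> 0" using that y by simp
    ultimately show ?thesis by linarith
  next
    case False
    hence "t = 0" using that by simp
    thus ?thesis using y by simp
  qed
  have f'c: "continuous_on {0..} f'" using C1 by (simp add: C1_halfline_def)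
  have gc: "continuous_on {0..1} g" unfolding g_def
    by (rule continuous_on_compose2[OF f'c]) (auto intro!: continuous_intros less_imp_le[OF pos])
  have int1: "integrable lborel (\<lambda>t. indicator {0..1} t *\<^sub>R g t)"
    by (rule borel_integrable_compact[OF _ gc]) auto
  have I: "set_integrable lborel {0<..<1} g"
    by (rule set_integrable_subset[OF int1[folded set_integrable_def]]) auto
  thus "integrable lborel (\<lambda>t. indicator {0<..<1} t * f' (t * x + (1 - t) * y))"
    by (simp add: set_integrable_def g_def)
  have HK: "(g has_integral divdiff f f' x y) {0..1}"
  proof (cases "x = y")
    case True
    hence "g = (\<lambda>t. f' x)" by (auto simp: g_def fun_eq_iff algebra_simps)
    thus ?thesis using has_integral_const_real[of "f' x" 0 1] True by (simp add: divdiff_def)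
  next
    case False
    define F where "F t = f (t * x + (1 - t) * y) / (x - y)" for t
    have "(g has_integral (F 1 - F 0)) {0..1}"
    proof (rule fundamental_theorem_of_calculus)
      fix t :: real assume t: "t \<in> {0..1}"
      define u where "u = t * x + (1 - t) * y"
      have u: "u > 0" using pos[OF t] by (simp add: u_def)
      have "(f has_real_derivative f' u) (at u within {0..})" using C1 u by (simp add: C1_halfline_def)
      hence "(f has_real_derivative f' u) (at u within {0<..})" by (rule DERIV_subset) auto
      moreover have "at u within {0<..} = at u" by (rule at_within_open) (use u in auto)
      ultimately have df: "(f has_real_derivative f' u) (at u)" by simp
      have dl: "((\<lambda>t. t * x + (1 - t) * y) has_real_derivative (x - y)) (at t)"
        by (auto intro!: derivative_eq_intros)
      have "((\<lambda>t. f (t * x + (1 - t) * y)) has_real_derivative f' u * (x - y)) (at t)"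
        using DERIV_chain2[OF df[unfolded u_def] dl] by (simp add: u_def)
      hence "(F has_real_derivative f' u * (x - y) / (x - y)) (at t)"
        unfolding F_def by (rule DERIV_cdivide)
      hence "(F has_real_derivative g t) (at t)" using False by (simp add: g_def u_def)
      thus "(F has_vector_derivative g t) (at t within {0..1})"
        by (simp add: has_real_derivative_iff_has_vector_derivative[symmetric] has_field_derivative_at_within)
    qed simp
    thus ?thesis using False by (simp add: F_def divdiff_def diff_divide_distrib)
  qed
  have "integral\<^sup>L lborel (\<lambda>t. indicator {0<..<1} t * f' (t * x + (1 - t) * y)) = (LINT t:{0<..<1}|lborel. g t)"
    by (simp add: set_lebesgue_integral_def g_def)
  also have "\<dots> = integral {0<..<1} g" by (rule set_borel_integral_eq_integral(2)[OF I])
  also have "\<dots> = divdiff f f' x y"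
    using HK by (subst (asm) has_integral_Icc_iff_Ioo) (rule integral_unique)
  finally show "integral\<^sup>L lborel (\<lambda>t. indicator {0<..<1} t * f' (t * x + (1 - t) * y)) = divdiff f f' x y" .
qed

lemma cp_alg:
  assumes s: "s > 0" and r: "0 < r" "r < 1" and t: "0 < t" "t < 1"
  shows "complex_of_real (s / (t * (1 - t))) * (cp (s * r / t) (a - 1) * cp (s * (1 - r) / (1 - t)) (b - 1))
       = cp s (a + b - 1) * (cp r (a - 1) * cp (1 - r) (b - 1)) * (cp t ((1 - a) - 1) * cp (1 - t) ((1 - b) - 1))"
proof -
  have e: "complex_of_real (s / (t * (1 - t))) = exp (complex_of_real (ln s - ln t - ln (1 - t)))"
    using s t by (simp add: exp_of_real exp_diff)
  have l1: "ln (s * r / t) = ln s + ln r - ln t" using s r t by (simp add: ln_mult ln_div)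
  have l2: "ln (s * (1 - r) / (1 - t)) = ln s + ln (1 - r) - ln (1 - t)" using s r t by (simp add: ln_mult ln_div)
  show ?thesis
    unfolding e cp_def l1 l2
    by (simp add: exp_add[symmetric] algebra_simps)
qed

lemma g2: "gammak 2 w = 1 / (Gamma w * Gamma (2 - w))" "gammak 1 a = 1 / (Gamma a * Gamma (1 - a))"
  by (simp_all add: gammak_def Gamma_fact[of 1, simplified] numeral_2_eq_2)

declare meas_fst_snd[measurable]

lemma main:
  fixes a b :: complex and f f' :: "real \<Rightarrow> real"
  assumes ra: "0 < Re a" "Re a < 1" and rb: "0 < Re b" "Re b < 1" and C1: "C1_halfline f f'"
    and If': "set_integrable lborel {0<..} (\<lambda>x. f' x * cmod (of_real x powr (a + b - 1)))"
  shows "gammak 1 a * gammak 1 b *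
           set_lebesgue_integral (lborel \<Otimes>\<^sub>M lborel) ({0<..} \<times> {0<..})
             (\<lambda>(x, y). of_real x powr (a - 1) * of_real y powr (b - 1) * of_real (divdiff f f' x y))
         = gammak 2 (a + b) *
           set_lebesgue_integral lborel {0<..}
             (\<lambda>x. of_real x powr (a + b - 1) * of_real (f' x))"
proof -
  define F' where "F' s = indicator {0..} s * f' s" for s
  have f'c: "continuous_on {0..} f'" using C1 by (simp add: C1_halfline_def)
  have F'm[measurable]: "F' \<in> borel_measurable borel"
    unfolding F'_def using borel_measurable_continuous_on_indicator[OF _ f'c] by simp
  define \<phi> where "\<phi> s = indicator {0<..} s *\<^sub>R (cp s (a + b - 1) * of_real (F' s))" for s
  define \<psi> where "\<psi> r = indicator {0<..<1} r *\<^sub>R (cp r (a - 1) * cp (1 - r) (b - 1))" for r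
  define chi where "chi t = indicator {0<..<1} t *\<^sub>R (cp t ((1 - a) - 1) * cp (1 - t) ((1 - b) - 1))" for t
  have \<psi>i: "integrable lborel \<psi>" and \<psi>v: "integral\<^sup>L lborel \<psi> = Beta a b"
    unfolding \<psi>_def using BetaC[of a b] ra rb by auto
  have chii: "integrable lborel chi" and chiv: "integral\<^sup>L lborel chi = Beta (1 - a) (1 - b)"
    unfolding chi_def using BetaC[of "1 - a" "1 - b"] ra rb by auto
  have \<phi>m: "\<phi> \<in> borel_measurable borel" unfolding \<phi>_def by measurable
  have \<phi>i: "integrable lborel \<phi>"
  proof (rule Bochner_Integration.integrable_bound[OF If'[unfolded set_integrable_def]])
    show "\<phi> \<in> borel_measurable lborel" using \<phi>m by simp
    show "AE x in lborel. norm (\<phi> x) \<le> norm (indicator {0<..} x *\<^sub>R (f' x * cmod (of_real x powr (a + b - 1))))"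
      by (intro AE_I2) (auto simp: \<phi>_def F'_def indicator_def norm_mult cp_powr norm_cp abs_mult)
  qed
  define Pf where "Pf q = \<phi> (fst (fst q)) * \<psi> (snd (fst q)) * chi (snd q)" for q :: "(real \<times> real) \<times> real"
  have Pf_eq: "Pf = (\<lambda>q. \<phi> (fst (fst q)) * \<psi> (snd (fst q)) * chi (snd q))" by (simp add: Pf_def fun_eq_iff)
  have P1i: "integrable (lborel :: (real \<times> real) measure) (\<lambda>p. \<phi> (fst p) * \<psi> (snd p))"
    and P1v: "integral\<^sup>L lborel (\<lambda>p. \<phi> (fst p) * \<psi> (snd p)) = integral\<^sup>L lborel \<phi> * integral\<^sup>L lborel \<psi>"
    using lborel_pair.product_integral[OF \<phi>i \<psi>i] by (simp_all add: lborel_prod)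
  have Pi: "integrable lborel Pf"
    and Pv: "integral\<^sup>L lborel Pf = integral\<^sup>L lborel \<phi> * Beta a b * Beta (1 - a) (1 - b)"
    unfolding Pf_eq using lborel_pair.product_integral[OF P1i chii] by (simp_all add: lborel_prod P1v \<psi>v chiv)
  define k where "k q = cp (fst (fst q) * snd (fst q) / snd q) (a - 1) * cp (fst (fst q) * (1 - snd (fst q)) / (1 - snd q)) (b - 1) * of_real (F' (fst (fst q)))" for q :: "(real \<times> real) \<times> real"
  have km: "k \<in> borel_measurable borel" unfolding k_def by measurable
  define rA :: "(real \<times> real) \<times> real \<Rightarrow> real" where "rA q = indicator ({0<..}\<times>{0<..}) (fst q) * indicator {0<..<1} (snd q)" for q :: "(real \<times> real) \<times> real"
  define rB :: "(real \<times> real) \<times> real \<Rightarrow> real" where "rB q = indicator ({0<..}\<times>{0<..<1}) (fst q) * indicator {0<..<1} (snd q)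
                * (fst (fst q) / (snd q * (1 - snd q)))" for q :: "(real \<times> real) \<times> real"
  have rAm: "rA \<in> borel_measurable borel" unfolding rA_def
    by (intro borel_measurable_times ind_comp borel_Times_real meas_fst_snd) auto
  have rBm: "rB \<in> borel_measurable borel" unfolding rB_def
    by (intro borel_measurable_times borel_measurable_divide ind_comp borel_Times_real meas_fst_snd borel_measurable_continuous_onI continuous_intros) auto
  have rAn: "\<And>q. rA q \<ge> 0" by (simp add: rA_def)
  have rBn: "\<And>q. rB q \<ge> 0" by (auto simp: rB_def indicator_def)
  have nnB': "(\<integral>\<^sup>+x. ennreal (rA x) * h (PhiB x) \<partial>lborel) = (\<integral>\<^sup>+y. ennreal (rB y) * h y \<partial>lborel)"
    if "h \<in> borel_measurable borel" for h :: "(real \<times> real) \<times> real \<Rightarrow> ennreal"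
    using nnB[OF that] by (simp add: rA_def rB_def)
  note T = transfer_lemma[where Phi = PhiB and rA = rA and rB = rB and k = k, OF PhiB_meas rAm rBm rAn rBn nnB' km]
  have eqB: "(\<lambda>q. rB q *\<^sub>R k q) = Pf"
  proof
    fix q :: "(real \<times> real) \<times> real"
    obtain s r t where q: "q = ((s, r), t)" by (metis prod.collapse)
    show "rB q *\<^sub>R k q = Pf q"
    proof (cases "s > 0 \<and> 0 < r \<and> r < 1 \<and> 0 < t \<and> t < 1")
      case True
      hence "rB q *\<^sub>R k q = (complex_of_real (s / (t * (1 - t))) * (cp (s * r / t) (a - 1) * cp (s * (1 - r) / (1 - t)) (b - 1))) * of_real (f' s)"
        by (simp add: q rB_def k_def F'_def indicator_def scaleR_conv_of_real)
      also have "\<dots> = (cp s (a + b - 1) * (cp r (a - 1) * cp (1 - r) (b - 1)) * (cp t ((1 - a) - 1) * cp (1 - t) ((1 - b) - 1))) * of_real (f' s)"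
        using True by (subst cp_alg) auto
      also have "\<dots> = Pf q"
        using True by (simp add: q Pf_def \<phi>_def \<psi>_def chi_def F'_def indicator_def)
      finally show ?thesis .
    next
      case False thus ?thesis by (auto simp: q Pf_def \<phi>_def \<psi>_def chi_def rB_def indicator_def)
    qed
  qed
  have Fi: "integrable lborel (\<lambda>q. rA q *\<^sub>R k (PhiB q))" using T(1) Pi eqB by simp
  have Fv: "integral\<^sup>L lborel (\<lambda>q. rA q *\<^sub>R k (PhiB q)) = integral\<^sup>L lborel \<phi> * Beta a b * Beta (1 - a) (1 - b)"
    using T(2) Pv eqB by simp
  have inner: "(\<integral>t. rA (p, t) *\<^sub>R k (PhiB (p, t)) \<partial>lborel)
      = indicator ({0<..}\<times>{0<..}) p *\<^sub>R (cp (fst p) (a - 1) * cp (snd p) (b - 1) * of_real (divdiff f f' (fst p) (snd p)))" for p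
  proof -
    obtain x y where p: "p = (x, y)" by (cases p)
    show ?thesis
    proof (cases "x > 0 \<and> y > 0")
      case True
      hence x: "x > 0" and y: "y > 0" by auto
      have "(\<lambda>t. rA ((x, y), t) *\<^sub>R k (PhiB ((x, y), t)))
          = (\<lambda>t. (cp x (a - 1) * cp y (b - 1)) * of_real (indicator {0<..<1} t * f' (t * x + (1 - t) * y)))"
      proof
        fix t :: real
        show "rA ((x, y), t) *\<^sub>R k (PhiB ((x, y), t)) = (cp x (a - 1) * cp y (b - 1)) * of_real (indicator {0<..<1} t * f' (t * x + (1 - t) * y))"
        proof (cases "0 < t \<and> t < 1")
          case True
          define s where "s = t * x + (1 - t) * y"
          have sp: "s > 0" unfolding s_def using True x y by (intro add_pos_pos) auto
          have e1: "s * (t * x / s) / t = x" using sp True by (simp add: field_simps)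
          have e2a: "s * (1 - t * x / s) = s - t * x" using sp by (simp add: right_diff_distrib)
          have e2b: "s - t * x = (1 - t) * y" by (simp add: s_def)
          have e2: "s * (1 - t * x / s) / (1 - t) = y" unfolding e2a e2b using True by simp
          have "PhiB ((x, y), t) = ((s, t * x / s), t)" by (simp add: PhiB_def s_def)
          thus ?thesis using True x y sp e1 e2
            by (simp add: rA_def k_def F'_def indicator_def s_def[symmetric])
        next
          case False
          thus ?thesis by (auto simp: rA_def indicator_def)
        qed
      qed
      note eqt = this
      have "(\<integral>t. rA (p, t) *\<^sub>R k (PhiB (p, t)) \<partial>lborel)
          = (\<integral>t. (cp x (a - 1) * cp y (b - 1)) * of_real (indicator {0<..<1} t * f' (t * x + (1 - t) * y)) \<partial>lborel)"
        by (simp only: p eqt)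
      also have "\<dots> = (cp x (a - 1) * cp y (b - 1)) * (\<integral>t. of_real (indicator {0<..<1} t * f' (t * x + (1 - t) * y)) \<partial>lborel)"
        by (rule integral_mult_right_zero)
      also have "\<dots> = (cp x (a - 1) * cp y (b - 1)) * of_real (\<integral>t. indicator {0<..<1} t * f' (t * x + (1 - t) * y) \<partial>lborel)"
        by (simp only: integral_complex_of_real)
      also have "\<dots> = (cp x (a - 1) * cp y (b - 1)) * of_real (divdiff f f' x y)"
        using ftc_real(2)[OF C1 x y] by simp
      finally show ?thesis using x y by (simp add: p indicator_def)
    next
      case False
      hence "(\<lambda>t. rA (p, t) *\<^sub>R k (PhiB (p, t))) = (\<lambda>t. 0)"
        by (auto simp: p rA_def indicator_def fun_eq_iff)
      thus ?thesis using False by (simp add: p indicator_def)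
    qed
  qed
  have Fi2: "integrable (lborel \<Otimes>\<^sub>M lborel) (\<lambda>q. rA q *\<^sub>R k (PhiB q))" using Fi by (simp add: lborel_prod)
  have "set_lebesgue_integral (lborel \<Otimes>\<^sub>M lborel) ({0<..} \<times> {0<..})
             (\<lambda>(x, y). of_real x powr (a - 1) * of_real y powr (b - 1) * of_real (divdiff f f' x y))
      = integral\<^sup>L lborel (\<lambda>p. indicator ({0<..}\<times>{0<..}) p *\<^sub>R (cp (fst p) (a - 1) * cp (snd p) (b - 1) * of_real (divdiff f f' (fst p) (snd p))))"
    unfolding set_lebesgue_integral_def lborel_prod
    by (intro Bochner_Integration.integral_cong) (auto simp: indicator_def cp_powr)
  also have "\<dots> = integral\<^sup>L lborel (\<lambda>p. \<integral>t. rA (p, t) *\<^sub>R k (PhiB (p, t)) \<partial>lborel)"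
    by (simp add: inner)
  also have "\<dots> = integral\<^sup>L (lborel \<Otimes>\<^sub>M lborel) (\<lambda>q. rA q *\<^sub>R k (PhiB q))"
    using lborel_pair.integral_fst'[OF Fi2] by simp
  also have "\<dots> = integral\<^sup>L lborel \<phi> * Beta a b * Beta (1 - a) (1 - b)"
    using Fv by (simp add: lborel_prod)
  finally have L: "set_lebesgue_integral (lborel \<Otimes>\<^sub>M lborel) ({0<..} \<times> {0<..})
             (\<lambda>(x, y). of_real x powr (a - 1) * of_real y powr (b - 1) * of_real (divdiff f f' x y))
      = integral\<^sup>L lborel \<phi> * Beta a b * Beta (1 - a) (1 - b)" .
  have R: "set_lebesgue_integral lborel {0<..} (\<lambda>x. of_real x powr (a + b - 1) * of_real (f' x)) = integral\<^sup>L lborel \<phi>"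
    unfolding set_lebesgue_integral_def
    by (intro Bochner_Integration.integral_cong) (auto simp: indicator_def cp_powr \<phi>_def F'_def)
  have nz: "Gamma a \<noteq> 0" "Gamma b \<noteq> 0" "Gamma (1 - a) \<noteq> 0" "Gamma (1 - b) \<noteq> 0"
      "Gamma (a + b) \<noteq> 0" "Gamma (2 - (a + b)) \<noteq> 0"
    using ra rb by (auto intro!: Gamma_nz)
  have s2: "1 - a + (1 - b) = 2 - (a + b)" by simp
  show ?thesis unfolding L R g2 Beta_def s2 using nz
    by (simp add: field_simps)
qed

theorem lemma6p10:
  fixes z \<zeta> :: complex and f f' :: "real \<Rightarrow> real"
  assumes "0 < Re z" "Re z < 1" "0 < Re \<zeta>" "Re \<zeta> < 1"
    and "C1_halfline f f'"
    and "set_integrable lborel {0<..} (\<lambda>x. f x * cmod (of_real x powr (z - 1)))"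
    and "set_integrable lborel {0<..} (\<lambda>x. f x * cmod (of_real x powr (\<zeta> - 1)))"
    and "set_integrable lborel {0<..} (\<lambda>x. f' x * cmod (of_real x powr (z + \<zeta> - 1)))"
    and "set_integrable (lborel \<Otimes>\<^sub>M lborel) ({0<..} \<times> {0<..})
           (\<lambda>(x, y). divdiff f f' x y * cmod (of_real x powr (z - 1) * of_real y powr (\<zeta> - 1)))"
  shows "gammak 1 z * gammak 1 \<zeta> *
           set_lebesgue_integral (lborel \<Otimes>\<^sub>M lborel) ({0<..} \<times> {0<..})
             (\<lambda>(x, y). of_real x powr (z - 1) * of_real y powr (\<zeta> - 1) * of_real (divdiff f f' x y))
         = gammak 2 (z + \<zeta>) *
           set_lebesgue_integral lborel {0<..}
             (\<lambda>x. of_real x powr (z + \<zeta> - 1) * of_real (f' x))"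
  using main[OF assms(1-5) assms(8)] .

end
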